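(* Let $K\ge 2$, $T\ge1$, and let $\mathbf{x}(t)\in[0,1]^K$, $t=1,\dots,T$, be any fixed sequence of reward vectors. Let $\tau=e\,\mathbb{G}_{max}-(4-e)\,\mathbb{G}_{min}$ and run the algorithm REX3 described in the context with transfer function $\psi$ equal to the identity and parameter $\gamma=\min\left\{\tfrac12,\sqrt{\frac{K\ln(K)}{\tau}}\right\}$ (with $\gamma=\tfrac12$ if $\tau=0$). Then the expected regret $\mathbb{G}_{max}-\mathbb{E}\mathbb{G}_{alg}$ is $\mathcal{O}\big(\sqrt{K\ln(K)\,T}\big)$.
   Context: Adversarial utility-based dueling bandit setting: there are $K$ arms; before play, an (oblivious) environment fixes a horizon $T$ and reward vectors $\mathbf{x}(t)=(x_1(t),\dots,x_K(t))\in[0,1]^K$ for $t=1,\dots,T$. At each round the learner selects a pair of arms $(a_t,b_t)$ and observes only the relative feedback $\psi(x_{a_t}(t)-x_{b_t}(t))$, here with $\psi(z)=z$. Algorithm REX3 with parameter $\gamma$: initialize $w_i(1)=1$ for all $i$. At each round $t$: set $p_i(t)=(1-\gamma)\frac{w_i(t)}{\sum_{j=1}^K w_j(t)}+\frac{\gamma}{K}$; draw two arms $a_t,b_t$ independently according to $\mathbf{p}(t)=(p_1(t),\dots,p_K(t))$; receive $\psi(x_{a_t}(t)-x_{b_t}(t))$; if $a_t\neq b_t$, set $w_{a_t}(t+1)=w_{a_t}(t)\exp\!\big(\frac{\gamma}{K}\frac{\psi(x_{a_t}-x_{b_t})}{2p_{a_t}(t)}\big)$ and $w_{b_t}(t+1)=w_{b_t}(t)\exp\!\big(-\frac{\gamma}{K}\frac{\psi(x_{a_t}-x_{b_t})}{2p_{b_t}(t)}\big)$;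 other weights unchanged. Notation: $\mathbb{G}_{max}=\max_i\sum_{t=1}^T x_i(t)$; $\mathbb{G}_{min}=\min_i\sum_{t=1}^T x_i(t)$; $\mathbb{G}_{alg}=\frac12\sum_{t=1}^T\big(x_{a_t}(t)+x_{b_t}(t)\big)$. Expectations are over the algorithm's internal randomization. The $\mathcal{O}$ hides an absolute constant independent of $K$, $T$ and the rewards (for $T$ large enough relative to $K\ln K$). *)

theory Defs
  imports Complex_Main
begin

text \<open>Arms are 0..K-1, rounds are 1..T; a reward sequence is x :: nat => nat => real,
  x t i = reward of arm i at round t. Weights are w :: nat => real.\<close>

definition rex3_prob :: "nat \<Rightarrow> real \<Rightarrow> (nat \<Rightarrow> real) \<Rightarrow> nat \<Rightarrow> real" where
  "rex3_prob K \<gamma> w i = (1 - \<gamma>) * w i / (\<Sum>j<K. w j) + \<gamma> / real K"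

text \<open>Weight update after playing (a,b) and observing z = psi(x_a - x_b) (psi = identity).\<close>
definition rex3_update :: "nat \<Rightarrow> real \<Rightarrow> (nat \<Rightarrow> real) \<Rightarrow> nat \<Rightarrow> nat \<Rightarrow> real \<Rightarrow> (nat \<Rightarrow> real)" where
  "rex3_update K \<gamma> w a b z =
     (if a = b then w
      else w(a := w a * exp ((\<gamma> / real K) * (z / (2 * rex3_prob K \<gamma> w a))),
             b := w b * exp (- (\<gamma> / real K) * (z / (2 * rex3_prob K \<gamma> w b)))))"

text \<open>Expected cumulative gain (x_a + x_b)/2 of REX3 over the n rounds t, t+1, ..., t+n-1,
  starting from weights w; the two arms are drawn independently from p(t).\<close>
fun rex3_exp_gain :: "nat \<Rightarrow> real \<Rightarrow> (nat \<Rightarrow> nat \<Rightarrow> real) \<Rightarrow> nat \<Rightarrow> nat \<Rightarrow> (nat \<Rightarrow> real) \<Rightarrow> real" where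
  "rex3_exp_gain K \<gamma> x t 0 w = 0"
| "rex3_exp_gain K \<gamma> x t (Suc n) w =
     (\<Sum>a<K. \<Sum>b<K. rex3_prob K \<gamma> w a * rex3_prob K \<gamma> w b *
        ((x t a + x t b) / 2
         + rex3_exp_gain K \<gamma> x (Suc t) n (rex3_update K \<gamma> w a b (x t a - x t b))))"

definition G_max :: "nat \<Rightarrow> nat \<Rightarrow> (nat \<Rightarrow> nat \<Rightarrow> real) \<Rightarrow> real" where
  "G_max K T x = Max ((\<lambda>i. \<Sum>t=1..T. x t i) ` {..<K})"

definition G_min :: "nat \<Rightarrow> nat \<Rightarrow> (nat \<Rightarrow> nat \<Rightarrow> real) \<Rightarrow> real" where
  "G_min K T x = Min ((\<lambda>i. \<Sum>t=1..T. x t i) ` {..<K})"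

definition rex3_EG_alg :: "nat \<Rightarrow> nat \<Rightarrow> real \<Rightarrow> (nat \<Rightarrow> nat \<Rightarrow> real) \<Rightarrow> real" where
  "rex3_EG_alg K T \<gamma> x = rex3_exp_gain K \<gamma> x 1 T (\<lambda>_. 1)"

definition rex3_tau :: "nat \<Rightarrow> nat \<Rightarrow> (nat \<Rightarrow> nat \<Rightarrow> real) \<Rightarrow> real" where
  "rex3_tau K T x = exp 1 * G_max K T x - (4 - exp 1) * G_min K T x"

definition rex3_gamma :: "nat \<Rightarrow> nat \<Rightarrow> (nat \<Rightarrow> nat \<Rightarrow> real) \<Rightarrow> real" where
  "rex3_gamma K T x =
     (if rex3_tau K T x = 0 then 1/2
      else min (1/2) (sqrt (real K * ln (real K) / rex3_tau K T x)))"

end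

theory Submission
  imports Defs
begin


lemma exp_quad_bound:
  fixes y :: real assumes "\<bar>y\<bar> \<le> 1" shows "exp y \<le> 1 + y + y^2"
proof (cases "y \<ge> 0")
  case True thus ?thesis using exp_bound[of y] assms by simp
next
  case False
  have h: "1 - y \<le> exp (-y)" using exp_ge_add_one_self[of "-y"] by simp
  have p: "0 < 1 - y" using False by simp
  have "exp y = 1 / exp (-y)" by (simp add: exp_minus field_simps)
  also have "\<dots> \<le> 1 / (1 - y)" using h p by (intro divide_left_mono) auto
  also have "\<dots> \<le> 1 + y + y^2"
  proof -
    have "(1 - y) * (1 + y + y^2) = 1 - y^3" by (simp add: algebra_simps power2_eq_square power3_eq_cube)
    moreover have "y^3 \<le> 0" using False by (simp add: power3_eq_cube mult_nonneg_nonpos)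
    ultimately have "1 \<le> (1 - y) * (1 + y + y^2)" by simp
    thus ?thesis using p by (simp add: field_simps)
  qed
  finally show ?thesis .
qed

lemma exp1_ge: "exp (1::real) \<ge> 5/2"
proof -
  have "(9/8::real) \<le> exp (1/8)" using exp_ge_add_one_self[of "1/8::real"] by simp
  hence "(9/8::real)^8 \<le> exp (1/8) ^ 8" by (intro power_mono) auto
  also have "exp (1/8::real) ^ 8 = exp 1" by (simp flip: exp_of_nat_mult)
  finally have "(9/8::real)^8 \<le> exp 1" .
  moreover have "(5/2::real) \<le> (9/8)^8" by (simp add: power_divide)
  ultimately show ?thesis by linarith
qed

lemma lin1: fixes \<eta> S G L J c1 c2 X k :: real
  shows "\<eta>*S - \<eta>*G \<le> L - J + c1*(G - X/k) + c2*(X + k*G) \<Longrightarrow> 0 \<le> L - J + (c1 + c2*k + \<eta>)*G - \<eta>*S - c1*X/k + c2*X"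
  by (simp add: algebra_simps)
lemma lin2: fixes Ls Js A Q \<eta> S' c1 c2 X' k L J \<mu> sx xj :: real
  assumes "0 \<le> Ls - Js + A*Q + (- \<eta>*S' - c1*X'/k + c2*X')" "Ls \<le> L + c1*(\<mu> - sx/k) + c2*(sx + k*\<mu>)"
    "Js = J + \<eta>*(xj - \<mu>)" "A = c1 + c2*k + \<eta>"
  shows "\<eta>*(xj + S') - \<eta>*(\<mu> + Q) \<le> L - J + c1*((\<mu> + Q) - (sx + X')/k) + c2*((sx + X') + k*(\<mu>+Q))"
  using assms by (simp add: algebra_simps add_divide_distrib)
lemma alg1: fixes W d L \<eta> g M S :: real assumes "W > 0" "d > 0"
  shows "1 * L + (\<eta> * (W * g * M / d) + \<eta>^2 * W / (4 * d) * (2 * S)) / W = L + \<eta> * g / d * M + \<eta>^2 / (2 * d) * S"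
  using assms by (simp add: field_simps)

context
  fixes K :: nat and \<gamma> :: real
  assumes K: "K \<ge> 1" and g0: "0 < \<gamma>" and g1: "\<gamma> \<le> 1/2"
begin

lemma W_pos: "(\<forall>i<K. (w::nat\<Rightarrow>real) i > 0) \<Longrightarrow> (\<Sum>j<K. w j) > 0"
  using K by (auto intro!: sum_pos simp: lessThan_empty_iff)

lemma prob_ge: assumes "\<forall>i<K. w i > 0" "i < K"
  shows "rex3_prob K \<gamma> w i \<ge> \<gamma> / real K"
    and "rex3_prob K \<gamma> w i \<ge> (1 - \<gamma>) * w i / (\<Sum>j<K. w j)"
proof -
  have W: "(\<Sum>j<K. w j) > 0" using W_pos assms by blast
  have a: "(1 - \<gamma>) * w i / (\<Sum>j<K. w j) \<ge> 0" using W assms g1 by (intro divide_nonneg_pos mult_nonneg_nonneg) auto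
  have b: "\<gamma> / real K \<ge> 0" using g0 by simp
  show "rex3_prob K \<gamma> w i \<ge> \<gamma> / real K" "rex3_prob K \<gamma> w i \<ge> (1 - \<gamma>) * w i / (\<Sum>j<K. w j)"
    unfolding rex3_prob_def using a b by linarith+
qed

lemma prob_pos: "\<forall>i<K. w i > 0 \<Longrightarrow> i < K \<Longrightarrow> rex3_prob K \<gamma> w i > 0"
  using prob_ge(1)[of w i] g0 K by (smt (verit) divide_pos_pos of_nat_0_less_iff less_le_trans zero_less_one)

lemma prob_sum: "\<forall>i<K. w i > 0 \<Longrightarrow> (\<Sum>i<K. rex3_prob K \<gamma> w i) = 1"
proof -
  assume h: "\<forall>i<K. w i > 0"
  have W: "(\<Sum>j<K. w j) > 0" using W_pos h by blast
  have "(\<Sum>i<K. rex3_prob K \<gamma> w i) = (1-\<gamma>) * (\<Sum>i<K. w i) / (\<Sum>j<K. w j) + real K * (\<gamma> / real K)"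
    unfolding rex3_prob_def by (simp add: sum.distrib sum_divide_distrib[symmetric] sum_distrib_left)
  also have "\<dots> = 1" using W K by simp
  finally show ?thesis .
qed

lemma upd_pos: assumes "\<forall>i<K. w i > 0" shows "\<forall>i<K. rex3_update K \<gamma> w a b z i > 0"
  using assms unfolding rex3_update_def by auto

lemma sum_upd2:
  fixes w :: "nat \<Rightarrow> real"
  assumes "a < K" "b < K" "a \<noteq> b"
  shows "(\<Sum>i<K. (w(a := A, b := B)) i) = (\<Sum>i<K. w i) + (A - w a) + (B - w b)"
proof -
  have "\<And>i. (w(a := A, b := B)) i = w i + (if i = a then A - w a else 0) + (if i = b then B - w b else 0)"
    using assms by auto
  hence "(\<Sum>i<K. (w(a := A, b := B)) i) = (\<Sum>i<K. w i + (if i = a then A - w a else 0) + (if i = b then B - w b else 0))"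
    by simp
  also have "\<dots> = (\<Sum>i<K. w i) + (\<Sum>i<K. (if i = a then A - w a else 0)) + (\<Sum>i<K. (if i = b then B - w b else 0))"
    by (simp add: sum.distrib)
  also have "\<dots> = (\<Sum>i<K. w i) + (A - w a) + (B - w b)" using assms by simp
  finally show ?thesis .
qed

lemma Wab_bound:
  fixes w xv :: "nat \<Rightarrow> real"
  assumes wpos: "\<forall>i<K. w i > 0" and xr: "\<forall>i<K. 0 \<le> xv i \<and> xv i \<le> 1" and ab: "a < K" "b < K"
  defines "p \<equiv> rex3_prob K \<gamma> w" and "\<eta> \<equiv> \<gamma> / real K"
  defines "u \<equiv> \<eta> * ((xv a - xv b) / (2 * p a))" and "v \<equiv> \<eta> * ((xv a - xv b) / (2 * p b))"
  shows "(\<Sum>i<K. rex3_update K \<gamma> w a b (xv a - xv b) i)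
         \<le> (\<Sum>i<K. w i) + (w a * (u + u^2) + w b * (- v + v^2))"
proof (cases "a = b")
  case True thus ?thesis unfolding rex3_update_def u_def v_def by simp
next
  case False
  have pa: "p a \<ge> \<eta>" "p b \<ge> \<eta>" using prob_ge(1)[OF wpos] ab unfolding p_def \<eta>_def by auto
  have eta: "\<eta> > 0" unfolding \<eta>_def using g0 K by simp
  have z: "\<bar>xv a - xv b\<bar> \<le> 1"
  proof -
    have "0 \<le> xv a" "xv a \<le> 1" "0 \<le> xv b" "xv b \<le> 1" using xr ab by auto
    thus ?thesis by linarith
  qed
  have ub: "\<bar>u\<bar> \<le> 1" "\<bar>- v\<bar> \<le> 1"
  proof -
    have "\<bar>u\<bar> = \<eta> * \<bar>xv a - xv b\<bar> / (2 * p a)" unfolding u_def using eta pa by (simp add: abs_mult)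
    also have "\<dots> \<le> \<eta> * 1 / (2 * p a)" using eta pa z by (intro divide_right_mono mult_left_mono) auto
    also have "\<dots> \<le> 1" using eta pa by (simp add: field_simps)
    finally show "\<bar>u\<bar> \<le> 1" .
    have "\<bar>-v\<bar> = \<eta> * \<bar>xv a - xv b\<bar> / (2 * p b)" unfolding v_def using eta pa by (simp add: abs_mult)
    also have "\<dots> \<le> \<eta> * 1 / (2 * p b)" using eta pa z by (intro divide_right_mono mult_left_mono) auto
    also have "\<dots> \<le> 1" using eta pa by (simp add: field_simps)
    finally show "\<bar>-v\<bar> \<le> 1" .
  qed
  have e1: "w a * exp u \<le> w a * (1 + u + u^2)"
    using exp_quad_bound[OF ub(1)] wpos ab by (intro mult_left_mono) auto
  have e2: "w b * exp (-v) \<le> w b * (1 + (-v) + (-v)^2)"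
    using exp_quad_bound[OF ub(2)] wpos ab by (intro mult_left_mono) auto
  have "(\<Sum>i<K. rex3_update K \<gamma> w a b (xv a - xv b) i)
      = (\<Sum>i<K. w i) + (w a * exp u - w a) + (w b * exp (-v) - w b)"
  proof -
    have "rex3_update K \<gamma> w a b (xv a - xv b) = w(a := w a * exp u, b := w b * exp (-v))"
      unfolding rex3_update_def u_def v_def p_def \<eta>_def using False by (simp add: mult_minus_left)
    thus ?thesis using sum_upd2[OF ab False] by simp
  qed
  also have "\<dots> \<le> (\<Sum>i<K. w i) + (w a * (u + u^2) + w b * (- v + v^2))"
    using e1 e2 by (simp add: algebra_simps)
  finally show ?thesis .
qed

lemma pointwise_B:
  fixes w xv :: "nat \<Rightarrow> real"
  assumes wpos: "\<forall>i<K. w i > 0" and xr: "\<forall>i<K. 0 \<le> xv i \<and> xv i \<le> 1" and ab: "a < K" "b < K"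
  defines "p \<equiv> rex3_prob K \<gamma> w" and "\<eta> \<equiv> \<gamma> / real K" and "W \<equiv> (\<Sum>i<K. w i)"
  defines "u \<equiv> \<eta> * ((xv a - xv b) / (2 * p a))" and "v \<equiv> \<eta> * ((xv a - xv b) / (2 * p b))"
  defines "C4 \<equiv> \<eta>^2 * W / (4 * (1 - \<gamma>))"
  shows "p a * p b * (w a * (u + u^2) + w b * (- v + v^2))
     \<le> \<eta>/2 * (p b * w a * (xv a - xv b)) - \<eta>/2 * (p a * w b * (xv a - xv b))
        + C4 * (p b * (xv a + xv b) + p a * (xv a + xv b))"
proof -
  have pa: "p a > 0" "p b > 0" using prob_pos[OF wpos] ab unfolding p_def by auto
  have W: "W > 0" using W_pos[OF wpos] unfolding W_def .
  have g1': "1 - \<gamma> > 0" using g1 by simp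
  have wa: "w a > 0" "w b > 0" using wpos ab by auto
  have pr: "(1 - \<gamma>) * w a / W \<le> p a" "(1 - \<gamma>) * w b / W \<le> p b"
    using prob_ge(2)[OF wpos] ab unfolding p_def W_def by auto
  have q: "w a / p a \<le> W / (1 - \<gamma>)" "w b / p b \<le> W / (1 - \<gamma>)"
    using pr pa W g1' by (simp_all add: field_simps)
  define z where "z = xv a - xv b"
  have xs: "0 \<le> xv a" "xv a \<le> 1" "0 \<le> xv b" "xv b \<le> 1" using xr ab by auto
  have z2: "z^2 \<le> xv a + xv b"
  proof -
    have "\<bar>z\<bar> \<le> 1" "\<bar>z\<bar> \<le> xv a + xv b" unfolding z_def using xs by linarith+
    hence "\<bar>z\<bar> * \<bar>z\<bar> \<le> 1 * (xv a + xv b)" by (intro mult_mono) auto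
    thus ?thesis by (simp add: power2_eq_square abs_mult_self_eq)
  qed
  have l1: "p a * p b * (w a * u) = \<eta>/2 * (p b * w a * z)"
    unfolding u_def z_def using pa by (simp add: field_simps)
  have l2: "p a * p b * (w b * (-v)) = - (\<eta>/2 * (p a * w b * z))"
    unfolding v_def z_def using pa by (simp add: field_simps)
  have e1: "p a * p b * (w a * u^2) = (\<eta>^2 * p b / 4) * (w a / p a) * z^2"
    unfolding u_def z_def using pa by (simp add: field_simps power2_eq_square)
  have e2: "p a * p b * (w b * v^2) = (\<eta>^2 * p a / 4) * (w b / p b) * z^2"
    unfolding v_def z_def using pa by (simp add: field_simps power2_eq_square)
  have c1: "(\<eta>^2 * p b / 4) * (w a / p a) * z^2 \<le> (\<eta>^2 * p b / 4) * (W / (1 - \<gamma>)) * (xv a + xv b)"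
    using q z2 pa wa W g1' by (intro mult_mono mult_left_mono) (auto intro!: divide_nonneg_pos mult_nonneg_nonneg)
  have c2: "(\<eta>^2 * p a / 4) * (w b / p b) * z^2 \<le> (\<eta>^2 * p a / 4) * (W / (1 - \<gamma>)) * (xv a + xv b)"
    using q z2 pa wa W g1' by (intro mult_mono mult_left_mono) (auto intro!: divide_nonneg_pos mult_nonneg_nonneg)
  have r1: "(\<eta>^2 * p b / 4) * (W / (1 - \<gamma>)) * (xv a + xv b) = C4 * (p b * (xv a + xv b))"
    unfolding C4_def by (simp add: field_simps)
  have r2: "(\<eta>^2 * p a / 4) * (W / (1 - \<gamma>)) * (xv a + xv b) = C4 * (p a * (xv a + xv b))"
    unfolding C4_def by (simp add: field_simps)
  have "p a * p b * (w a * (u + u^2) + w b * (- v + v^2))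
      = p a * p b * (w a * u) + p a * p b * (w b * (-v)) + p a * p b * (w a * u^2) + p a * p b * (w b * v^2)"
    by (simp add: algebra_simps)
  also have "\<dots> \<le> \<eta>/2 * (p b * w a * z) - \<eta>/2 * (p a * w b * z) + C4 * (p b * (xv a + xv b)) + C4 * (p a * (xv a + xv b))"
    using l1 l2 e1 e2 c1 c2 r1 r2 by linarith
  finally show ?thesis unfolding z_def by (simp add: algebra_simps)
qed

lemma sums_S:
  fixes p w xv :: "nat \<Rightarrow> real"
  assumes ps: "(\<Sum>i<K. p i) = 1"
  shows "(\<Sum>a<K. \<Sum>b<K. p b * w a * (xv a - xv b)) = (\<Sum>i<K. w i * xv i) - (\<Sum>i<K. w i) * (\<Sum>i<K. p i * xv i)"
    and "(\<Sum>a<K. \<Sum>b<K. p a * w b * (xv a - xv b)) = (\<Sum>i<K. p i * xv i) * (\<Sum>i<K. w i) - (\<Sum>i<K. w i * xv i)"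
    and "(\<Sum>a<K. \<Sum>b<K. p b * (xv a + xv b) + p a * (xv a + xv b)) = 2 * ((\<Sum>i<K. xv i) + real K * (\<Sum>i<K. p i * xv i))"
proof -
  have i1: "\<And>a. (\<Sum>b<K. p b * w a * (xv a - xv b)) = w a * xv a - w a * (\<Sum>i<K. p i * xv i)"
  proof -
    fix a
    have "(\<Sum>b<K. p b * w a * (xv a - xv b)) = (w a * xv a) * (\<Sum>b<K. p b) - w a * (\<Sum>b<K. p b * xv b)"
      by (simp add: sum_distrib_left sum_distrib_right sum_subtractf algebra_simps)
    thus "?thesis a" using ps by simp
  qed
  show "(\<Sum>a<K. \<Sum>b<K. p b * w a * (xv a - xv b)) = (\<Sum>i<K. w i * xv i) - (\<Sum>i<K. w i) * (\<Sum>i<K. p i * xv i)"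
    by (simp add: i1 sum_subtractf sum_distrib_right)
  have i2: "\<And>a. (\<Sum>b<K. p a * w b * (xv a - xv b)) = p a * xv a * (\<Sum>i<K. w i) - p a * (\<Sum>i<K. w i * xv i)"
    by (simp add: sum_distrib_left sum_distrib_right sum_subtractf algebra_simps)
  show "(\<Sum>a<K. \<Sum>b<K. p a * w b * (xv a - xv b)) = (\<Sum>i<K. p i * xv i) * (\<Sum>i<K. w i) - (\<Sum>i<K. w i * xv i)"
  proof -
    have "(\<Sum>a<K. p a * xv a * (\<Sum>i<K. w i) - p a * (\<Sum>i<K. w i * xv i))
       = (\<Sum>i<K. p i * xv i) * (\<Sum>i<K. w i) - (\<Sum>a<K. p a) * (\<Sum>i<K. w i * xv i)"
      by (simp add: sum_subtractf sum_distrib_right)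
    thus ?thesis using ps by (simp add: i2)
  qed
  have i3: "\<And>a. (\<Sum>b<K. p b * (xv a + xv b) + p a * (xv a + xv b))
      = xv a * (\<Sum>b<K. p b) + (\<Sum>b<K. p b * xv b) + real K * (p a * xv a) + p a * (\<Sum>b<K. xv b)"
    by (simp add: sum.distrib sum_distrib_left sum_distrib_right algebra_simps)
  show "(\<Sum>a<K. \<Sum>b<K. p b * (xv a + xv b) + p a * (xv a + xv b)) = 2 * ((\<Sum>i<K. xv i) + real K * (\<Sum>i<K. p i * xv i))"
  proof -
    have "(\<Sum>a<K. xv a * (\<Sum>b<K. p b) + (\<Sum>b<K. p b * xv b) + real K * (p a * xv a) + p a * (\<Sum>b<K. xv b))
      = (\<Sum>a<K. xv a) * (\<Sum>b<K. p b) + real K * (\<Sum>b<K. p b * xv b) + real K * (\<Sum>a<K. p a * xv a) + (\<Sum>a<K. p a) * (\<Sum>b<K. xv b)"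
      by (simp add: sum.distrib flip: sum_distrib_left sum_distrib_right)
    thus ?thesis using ps by (simp add: i3)
  qed
qed

lemma one_step:
  fixes w xv :: "nat \<Rightarrow> real"
  assumes wpos: "\<forall>i<K. w i > 0" and xr: "\<forall>i<K. 0 \<le> xv i \<and> xv i \<le> 1"
  defines "p \<equiv> rex3_prob K \<gamma> w" and "\<eta> \<equiv> \<gamma> / real K" and "W \<equiv> (\<Sum>i<K. w i)"
  defines "\<mu> \<equiv> (\<Sum>i<K. p i * xv i)" and "sx \<equiv> (\<Sum>i<K. xv i)"
  shows "(\<Sum>a<K. \<Sum>b<K. p a * p b * ln (\<Sum>i<K. rex3_update K \<gamma> w a b (xv a - xv b) i))
     \<le> ln W + \<eta> * \<gamma> / (1 - \<gamma>) * (\<mu> - sx / real K) + \<eta>^2 / (2 * (1 - \<gamma>)) * (sx + real K * \<mu>)"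
proof -
  define B where "B a b = (let u = \<eta> * ((xv a - xv b) / (2 * p a)); v = \<eta> * ((xv a - xv b) / (2 * p b))
      in w a * (u + u^2) + w b * (- v + v^2))" for a b
  define C4 where "C4 = \<eta>^2 * W / (4 * (1 - \<gamma>))"
  have W: "W > 0" using W_pos[OF wpos] unfolding W_def .
  have g1': "1 - \<gamma> > 0" using g1 by simp
  have Kp: "real K > 0" using K by simp
  have ps: "(\<Sum>i<K. p i) = 1" using prob_sum[OF wpos] unfolding p_def .
  have pnn: "\<And>i. i < K \<Longrightarrow> p i \<ge> 0" using prob_pos[OF wpos] unfolding p_def by (simp add: less_imp_le)
  have lnb: "ln (\<Sum>i<K. rex3_update K \<gamma> w a b (xv a - xv b) i) \<le> ln W + B a b / W"
    if ab: "a < K" "b < K" for a b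
  proof -
    define Wab where "Wab = (\<Sum>i<K. rex3_update K \<gamma> w a b (xv a - xv b) i)"
    have Wab: "Wab > 0" unfolding Wab_def using W_pos[OF upd_pos[OF wpos]] .
    have "Wab \<le> W + B a b" unfolding Wab_def W_def B_def Let_def p_def \<eta>_def
      using Wab_bound[OF wpos xr ab] by simp
    have "ln Wab = ln W + ln (Wab / W)" using Wab W by (simp add: ln_div)
    also have "\<dots> \<le> ln W + (Wab / W - 1)" using ln_le_minus_one[of "Wab / W"] Wab W by simp
    also have "Wab / W - 1 \<le> B a b / W"
    proof -
      have "Wab / W - 1 = (Wab - W) / W" using W by (simp add: field_simps)
      also have "(Wab - W) / W \<le> B a b / W" using \<open>Wab \<le> W + B a b\<close> W by (intro divide_right_mono) auto
      finally show ?thesis .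
    qed
    hence "ln W + (Wab / W - 1) \<le> ln W + B a b / W" by simp
    finally show ?thesis unfolding Wab_def .
  qed
  have "(\<Sum>a<K. \<Sum>b<K. p a * p b * ln (\<Sum>i<K. rex3_update K \<gamma> w a b (xv a - xv b) i))
     \<le> (\<Sum>a<K. \<Sum>b<K. p a * p b * (ln W + B a b / W))"
    using lnb pnn by (intro sum_mono mult_left_mono) auto
  also have "\<dots> = (\<Sum>a<K. \<Sum>b<K. p a * p b) * ln W + (\<Sum>a<K. \<Sum>b<K. p a * p b * B a b) / W"
    by (simp add: sum.distrib sum_distrib_right sum_distrib_left sum_divide_distrib algebra_simps)
  also have "(\<Sum>a<K. \<Sum>b<K. p a * p b) = 1"
    using ps by (simp flip: sum_distrib_left sum_distrib_right)
  also have "(\<Sum>a<K. \<Sum>b<K. p a * p b * B a b)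
     \<le> (\<Sum>a<K. \<Sum>b<K. \<eta>/2 * (p b * w a * (xv a - xv b)) - \<eta>/2 * (p a * w b * (xv a - xv b))
        + C4 * (p b * (xv a + xv b) + p a * (xv a + xv b)))"
    using pointwise_B[OF wpos xr] unfolding B_def Let_def C4_def p_def \<eta>_def W_def
    by (intro sum_mono) auto
  also have "\<dots> = \<eta>/2 * (\<Sum>a<K. \<Sum>b<K. p b * w a * (xv a - xv b)) - \<eta>/2 * (\<Sum>a<K. \<Sum>b<K. p a * w b * (xv a - xv b))
        + C4 * (\<Sum>a<K. \<Sum>b<K. p b * (xv a + xv b) + p a * (xv a + xv b))"
    by (simp add: sum.distrib sum_subtractf sum_distrib_left distrib_left mult_ac)
  also have "\<dots> = \<eta> * ((\<Sum>i<K. w i * xv i) - W * \<mu>) + C4 * (2 * (sx + real K * \<mu>))"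
    unfolding sums_S[OF ps] W_def[symmetric] \<mu>_def[symmetric] sx_def[symmetric] by (simp add: algebra_simps mult.left_commute)
  also have "(\<Sum>i<K. w i * xv i) - W * \<mu> = W * \<gamma> * (\<mu> - sx / real K) / (1 - \<gamma>)"
  proof -
    have wi: "w i = W * (p i - \<gamma> / real K) / (1 - \<gamma>)" for i
      unfolding p_def rex3_prob_def W_def using W g1' by (simp add: W_def field_simps)
    have "(\<Sum>i<K. w i * xv i) = (\<Sum>i<K. W / (1 - \<gamma>) * (p i * xv i) - W / (1 - \<gamma>) * (\<gamma> / real K) * xv i)"
    proof -
      have "w i * xv i = W / (1 - \<gamma>) * (p i * xv i) - W / (1 - \<gamma>) * (\<gamma> / real K) * xv i" for i
      proof -
        have "w i * xv i = W * (p i - \<gamma> / real K) / (1 - \<gamma>) * xv i" using wi[of i] by simp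
        also have "\<dots> = W / (1 - \<gamma>) * (p i * xv i) - W / (1 - \<gamma>) * (\<gamma> / real K) * xv i"
          by (simp add: algebra_simps diff_divide_distrib)
        finally show ?thesis .
      qed
      thus ?thesis by simp
    qed
    also have "\<dots> = W / (1 - \<gamma>) * \<mu> - W / (1 - \<gamma>) * (\<gamma> / real K) * sx"
      unfolding \<mu>_def sx_def by (simp add: sum_subtractf sum_distrib_left)
    finally have e: "(\<Sum>i<K. w i * xv i) = W / (1 - \<gamma>) * \<mu> - W / (1 - \<gamma>) * (\<gamma> / real K) * sx" .
    have "W / (1 - \<gamma>) * \<mu> - W / (1 - \<gamma>) * (\<gamma> / real K) * sx - W * \<mu> = W * \<gamma> * (\<mu> - sx / real K) / (1 - \<gamma>)"
    proof -
      define d where "d = 1 - \<gamma>"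
      have d: "d > 0" "\<gamma> = 1 - d" using g1' unfolding d_def by auto
      have "W / d * \<mu> - W / d * ((1 - d) / real K) * sx - W * \<mu> = W * (1 - d) * (\<mu> - sx / real K) / d"
        using d(1) Kp by (simp add: field_simps)
      thus ?thesis unfolding d(2) by simp
    qed
    thus ?thesis using e by simp
  qed
  finally have "(\<Sum>a<K. \<Sum>b<K. p a * p b * ln (\<Sum>i<K. rex3_update K \<gamma> w a b (xv a - xv b) i))
      \<le> 1 * ln W + (\<eta> * (W * \<gamma> * (\<mu> - sx / real K) / (1 - \<gamma>)) + C4 * (2 * (sx + real K * \<mu>))) / W"
    using W by (simp add: divide_right_mono)
  also have "\<dots> = ln W + \<eta> * \<gamma> / (1 - \<gamma>) * (\<mu> - sx / real K) + \<eta>^2 / (2 * (1 - \<gamma>)) * (sx + real K * \<mu>)"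
    unfolding C4_def by (rule alg1[OF W g1'])
  finally show ?thesis .
qed

lemma ln_wj_step:
  fixes w xv :: "nat \<Rightarrow> real"
  assumes wpos: "\<forall>i<K. w i > 0" and j: "j < K" and ab: "a < K" "b < K"
  defines "p \<equiv> rex3_prob K \<gamma> w" and "\<eta> \<equiv> \<gamma> / real K"
  shows "ln (rex3_update K \<gamma> w a b (xv a - xv b) j) = ln (w j) + \<eta> *
     ((if a = j then (xv a - xv b) / (2 * p a) else 0) - (if b = j then (xv a - xv b) / (2 * p b) else 0))"
proof -
  have wj: "w j > 0" using wpos j by auto
  show ?thesis
  proof (cases "a = b")
    case True thus ?thesis unfolding rex3_update_def by simp
  next
    case False
    show ?thesis
    proof (cases "j = a")
      case True thus ?thesis using False wj unfolding rex3_update_def p_def \<eta>_def by (simp add: ln_mult)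
    next
      case ja: False
      show ?thesis
      proof (cases "j = b")
        case True thus ?thesis using False ja wj unfolding rex3_update_def p_def \<eta>_def by (simp add: ln_mult)
      next
        case False thus ?thesis using ja \<open>a \<noteq> b\<close> unfolding rex3_update_def by auto
      qed
    qed
  qed
qed

lemma sum_ln_wj:
  fixes w xv :: "nat \<Rightarrow> real"
  assumes wpos: "\<forall>i<K. w i > 0" and j: "j < K"
  defines "p \<equiv> rex3_prob K \<gamma> w" and "\<eta> \<equiv> \<gamma> / real K"
  shows "(\<Sum>a<K. \<Sum>b<K. p a * p b * ln (rex3_update K \<gamma> w a b (xv a - xv b) j))
     = ln (w j) + \<eta> * (xv j - (\<Sum>i<K. p i * xv i))"
proof -
  have ps: "(\<Sum>i<K. p i) = 1" using prob_sum[OF wpos] unfolding p_def .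
  have pp: "(\<Sum>a<K. \<Sum>b<K. p a * p b) = 1"
    using ps by (simp flip: sum_distrib_left sum_distrib_right)
  have pos: "\<And>i. i < K \<Longrightarrow> p i > 0" using prob_pos[OF wpos] unfolding p_def by auto
  define D1 where "D1 a b = (if a = j then p b * (xv j - xv b) / 2 else 0)" for a b
  define D2 where "D2 a b = (if b = j then p a * (xv a - xv j) / 2 else 0)" for a b
  have pw: "p a * p b * ln (rex3_update K \<gamma> w a b (xv a - xv b) j) = p a * p b * ln (w j) + \<eta> * (D1 a b - D2 a b)"
    if ab: "a < K" "b < K" for a b
  proof -
    define E where "E = (if a = j then (xv a - xv b) / (2 * p a) else 0) - (if b = j then (xv a - xv b) / (2 * p b) else 0)"
    have e: "ln (rex3_update K \<gamma> w a b (xv a - xv b) j) = ln (w j) + \<eta> * E"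
      using ln_wj_step[OF wpos j ab, of xv] unfolding E_def p_def \<eta>_def .
    have pa: "p a > 0" "p b > 0" using pos ab by auto
    have al: "p a * p b * E = D1 a b - D2 a b"
      unfolding E_def D1_def D2_def using pa by (cases "a = j"; cases "b = j") (simp_all add: field_simps)
    have "p a * p b * ln (rex3_update K \<gamma> w a b (xv a - xv b) j) = p a * p b * ln (w j) + \<eta> * (p a * p b * E)"
      unfolding e by (simp add: algebra_simps)
    thus ?thesis unfolding al .
  qed
  have "(\<Sum>a<K. \<Sum>b<K. p a * p b * ln (rex3_update K \<gamma> w a b (xv a - xv b) j))
     = (\<Sum>a<K. \<Sum>b<K. p a * p b * ln (w j) + \<eta> * (D1 a b - D2 a b))"
    using pw by (intro sum.cong refl) auto
  also have "\<dots> = (\<Sum>a<K. \<Sum>b<K. p a * p b) * ln (w j) + \<eta> * ((\<Sum>a<K. \<Sum>b<K. D1 a b) - (\<Sum>a<K. \<Sum>b<K. D2 a b))"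
    by (simp add: sum.distrib sum_subtractf sum_distrib_left sum_distrib_right right_diff_distrib)
  also have "(\<Sum>a<K. \<Sum>b<K. D1 a b) = (\<Sum>b<K. p b * (xv j - xv b) / 2)"
  proof -
    have "\<And>a. (\<Sum>b<K. D1 a b) = (if a = j then (\<Sum>b<K. p b * (xv j - xv b) / 2) else 0)"
      unfolding D1_def by simp
    thus ?thesis using j by simp
  qed
  also have "(\<Sum>a<K. \<Sum>b<K. D2 a b) = (\<Sum>a<K. p a * (xv a - xv j) / 2)"
    unfolding D2_def using j by simp
  also have "(\<Sum>b<K. p b * (xv j - xv b) / 2) - (\<Sum>a<K. p a * (xv a - xv j) / 2) = xv j - (\<Sum>i<K. p i * xv i)"
  proof -
    have "(\<Sum>b<K. p b * (xv j - xv b) / 2) = (xv j * (\<Sum>b<K. p b) - (\<Sum>b<K. p b * xv b)) / 2"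
      by (simp add: sum_divide_distrib[symmetric] sum_subtractf sum_distrib_left algebra_simps)
    moreover have "(\<Sum>a<K. p a * (xv a - xv j) / 2) = ((\<Sum>b<K. p b * xv b) - xv j * (\<Sum>b<K. p b)) / 2"
      by (simp add: sum_divide_distrib[symmetric] sum_subtractf sum_distrib_left algebra_simps)
    ultimately show ?thesis using ps by simp
  qed
  finally show ?thesis using pp by simp
qed

lemma sum_pp_mu:
  fixes p xv :: "nat \<Rightarrow> real"
  assumes ps: "(\<Sum>i<K. p i) = 1"
  shows "(\<Sum>a<K. \<Sum>b<K. p a * p b * ((xv a + xv b) / 2)) = (\<Sum>i<K. p i * xv i)"
proof -
  have "\<And>a. (\<Sum>b<K. p a * p b * ((xv a + xv b) / 2)) = p a * xv a / 2 * (\<Sum>b<K. p b) + p a / 2 * (\<Sum>b<K. p b * xv b)"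
    by (simp add: sum.distrib sum_distrib_left sum_distrib_right algebra_simps add_divide_distrib)
  hence "(\<Sum>a<K. \<Sum>b<K. p a * p b * ((xv a + xv b) / 2)) = (\<Sum>a<K. p a * xv a / 2 + p a / 2 * (\<Sum>b<K. p b * xv b))"
    using ps by simp
  also have "\<dots> = (\<Sum>a<K. p a * xv a) / 2 + (\<Sum>a<K. p a) / 2 * (\<Sum>b<K. p b * xv b)"
    by (simp add: sum.distrib sum_divide_distrib sum_distrib_right)
  finally show ?thesis using ps by simp
qed

lemma gain_nonneg:
  fixes x :: "nat \<Rightarrow> nat \<Rightarrow> real"
  assumes xr: "\<forall>t i. 1 \<le> t \<and> t \<le> T \<and> i < K \<longrightarrow> 0 \<le> x t i \<and> x t i \<le> 1"
  shows "\<forall>t w. (\<forall>i<K. w i > 0) \<longrightarrow> 1 \<le> t \<longrightarrow> t + n \<le> T + 1 \<longrightarrow> rex3_exp_gain K \<gamma> x t n w \<ge> 0"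
proof (induction n)
  case 0 thus ?case by simp
next
  case (Suc n)
  show ?case
  proof (intro allI impI)
    fix t w assume wpos: "\<forall>i<K. (w::nat\<Rightarrow>real) i > 0" and t: "1 \<le> t" "t + Suc n \<le> T + 1"
    have "\<forall>a<K. \<forall>b<K. 0 \<le> rex3_prob K \<gamma> w a * rex3_prob K \<gamma> w b *
        ((x t a + x t b) / 2 + rex3_exp_gain K \<gamma> x (Suc t) n (rex3_update K \<gamma> w a b (x t a - x t b)))"
    proof (intro allI impI)
      fix a b assume ab: "a < K" "b < K"
      have "0 \<le> rex3_exp_gain K \<gamma> x (Suc t) n (rex3_update K \<gamma> w a b (x t a - x t b))"
        using Suc.IH upd_pos[OF wpos] t by auto
      moreover have "0 \<le> x t a" "0 \<le> x t b" using xr t ab by auto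
      moreover have "0 \<le> rex3_prob K \<gamma> w a" "0 \<le> rex3_prob K \<gamma> w b"
        using prob_pos[OF wpos] ab by (auto simp: less_imp_le)
      ultimately show "0 \<le> rex3_prob K \<gamma> w a * rex3_prob K \<gamma> w b *
        ((x t a + x t b) / 2 + rex3_exp_gain K \<gamma> x (Suc t) n (rex3_update K \<gamma> w a b (x t a - x t b)))"
        by simp
    qed
    thus "0 \<le> rex3_exp_gain K \<gamma> x t (Suc n) w"
      by (auto intro!: sum_nonneg)
  qed
qed

lemma main_ind:
  fixes x :: "nat \<Rightarrow> nat \<Rightarrow> real"
  assumes xr: "\<forall>t i. 1 \<le> t \<and> t \<le> T \<and> i < K \<longrightarrow> 0 \<le> x t i \<and> x t i \<le> 1" and j: "j < K"
  defines "\<eta> \<equiv> \<gamma> / real K" and "c1 \<equiv> \<gamma> / real K * \<gamma> / (1 - \<gamma>)" and "c2 \<equiv> (\<gamma> / real K)^2 / (2 * (1 - \<gamma>))"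
  shows "\<forall>t w. (\<forall>i<K. w i > 0) \<longrightarrow> 1 \<le> t \<longrightarrow> t + n \<le> T + 1 \<longrightarrow>
    \<eta> * (\<Sum>s=t..<t+n. x s j) - \<eta> * rex3_exp_gain K \<gamma> x t n w
    \<le> ln (\<Sum>i<K. w i) - ln (w j) + c1 * (rex3_exp_gain K \<gamma> x t n w - (\<Sum>s=t..<t+n. \<Sum>i<K. x s i) / real K)
      + c2 * ((\<Sum>s=t..<t+n. \<Sum>i<K. x s i) + real K * rex3_exp_gain K \<gamma> x t n w)"
proof (induction n)
  case 0
  show ?case
  proof (intro allI impI)
    fix t and w :: "nat \<Rightarrow> real" assume wpos: "\<forall>i<K. w i > 0"
    have "w j \<le> (\<Sum>i<K. w i)" using wpos j by (intro member_le_sum) (auto simp: less_imp_le)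
    moreover have "w j > 0" using wpos j by simp
    ultimately have "ln (w j) \<le> ln (\<Sum>i<K. w i)" by (simp add: ln_le_cancel_iff)
    thus "\<eta> * (\<Sum>s=t..<t+0. x s j) - \<eta> * rex3_exp_gain K \<gamma> x t 0 w
    \<le> ln (\<Sum>i<K. w i) - ln (w j) + c1 * (rex3_exp_gain K \<gamma> x t 0 w - (\<Sum>s=t..<t+0. \<Sum>i<K. x s i) / real K)
      + c2 * ((\<Sum>s=t..<t+0. \<Sum>i<K. x s i) + real K * rex3_exp_gain K \<gamma> x t 0 w)" by simp
  qed
next
  case (Suc n)
  show ?case
  proof (intro allI impI)
    fix t and w :: "nat \<Rightarrow> real" assume wpos: "\<forall>i<K. w i > 0" and t: "1 \<le> t" "t + Suc n \<le> T + 1"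
    define p where "p = rex3_prob K \<gamma> w"
    define \<mu> where "\<mu> = (\<Sum>i<K. p i * x t i)"
    define sx where "sx = (\<Sum>i<K. x t i)"
    define wab where "wab a b = rex3_update K \<gamma> w a b (x t a - x t b)" for a b
    define Gab where "Gab a b = rex3_exp_gain K \<gamma> x (Suc t) n (wab a b)" for a b
    define S' where "S' = (\<Sum>s=Suc t..<Suc t+n. x s j)"
    define X' where "X' = (\<Sum>s=Suc t..<Suc t+n. \<Sum>i<K. x s i)"
    define A where "A = c1 + c2 * real K + \<eta>"
    define cst where "cst = - \<eta> * S' - c1 * X' / real K + c2 * X'"
    define Lab where "Lab a b = ln (\<Sum>i<K. wab a b i)" for a b
    define Jab where "Jab a b = ln (wab a b j)" for a b
    define Q where "Q = (\<Sum>a<K. \<Sum>b<K. p a * p b * Gab a b)"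
    have xt: "\<forall>i<K. 0 \<le> x t i \<and> x t i \<le> 1" using xr t by auto
    have ps: "(\<Sum>i<K. p i) = 1" using prob_sum[OF wpos] unfolding p_def .
    have pp: "(\<Sum>a<K. \<Sum>b<K. p a * p b) = 1"
      using ps by (simp flip: sum_distrib_left sum_distrib_right)
    have pnn: "\<And>i. i < K \<Longrightarrow> p i \<ge> 0" using prob_pos[OF wpos] unfolding p_def by (simp add: less_imp_le)
    have H: "0 \<le> Lab a b - Jab a b + A * Gab a b + cst" if ab: "a < K" "b < K" for a b
    proof -
      have "\<forall>i<K. wab a b i > 0" unfolding wab_def using upd_pos[OF wpos] by blast
      hence ih: "\<eta> * S' - \<eta> * Gab a b \<le> Lab a b - Jab a b + c1 * (Gab a b - X' / real K) + c2 * (X' + real K * Gab a b)"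
        unfolding S'_def X'_def Gab_def Lab_def Jab_def
        by (intro Suc.IH[rule_format]) (use t in auto)
      show ?thesis using lin1[OF ih] unfolding A_def cst_def by simp
    qed
    have "0 \<le> (\<Sum>a<K. \<Sum>b<K. p a * p b * (Lab a b - Jab a b + A * Gab a b + cst))"
      using H pnn by (intro sum_nonneg mult_nonneg_nonneg) auto
    also have "\<dots> = (\<Sum>a<K. \<Sum>b<K. p a * p b * Lab a b) - (\<Sum>a<K. \<Sum>b<K. p a * p b * Jab a b) + A * Q
        + cst * (\<Sum>a<K. \<Sum>b<K. p a * p b)"
    proof -
      have "\<And>a b. p a * p b * (Lab a b - Jab a b + A * Gab a b + cst)
          = p a * p b * Lab a b - p a * p b * Jab a b + A * (p a * p b * Gab a b) + cst * (p a * p b)"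
        by (simp add: algebra_simps)
      thus ?thesis unfolding Q_def by (simp add: sum.distrib sum_subtractf sum_distrib_left)
    qed
    finally have Hs: "0 \<le> (\<Sum>a<K. \<Sum>b<K. p a * p b * Lab a b) - (\<Sum>a<K. \<Sum>b<K. p a * p b * Jab a b) + A * Q + cst"
      using pp by simp
    have L: "(\<Sum>a<K. \<Sum>b<K. p a * p b * Lab a b) \<le> ln (\<Sum>i<K. w i) + c1 * (\<mu> - sx / real K) + c2 * (sx + real K * \<mu>)"
      using one_step[OF wpos xt] unfolding Lab_def wab_def p_def \<mu>_def sx_def c1_def c2_def by simp
    have J: "(\<Sum>a<K. \<Sum>b<K. p a * p b * Jab a b) = ln (w j) + \<eta> * (x t j - \<mu>)"
      using sum_ln_wj[OF wpos j, of "x t"] unfolding Jab_def wab_def p_def \<mu>_def \<eta>_def by simp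
    have G: "rex3_exp_gain K \<gamma> x t (Suc n) w = \<mu> + Q"
    proof -
      have "rex3_exp_gain K \<gamma> x t (Suc n) w = (\<Sum>a<K. \<Sum>b<K. p a * p b * ((x t a + x t b) / 2)) + Q"
        unfolding Q_def Gab_def wab_def p_def by (simp add: sum.distrib distrib_left)
      thus ?thesis using sum_pp_mu[OF ps] unfolding \<mu>_def by simp
    qed
    have sums: "(\<Sum>s=t..<t+Suc n. x s j) = x t j + S'" "(\<Sum>s=t..<t+Suc n. \<Sum>i<K. x s i) = sx + X'"
      unfolding S'_def X'_def sx_def by (simp_all add: sum.atLeast_Suc_lessThan)
    have "\<eta> * (x t j + S') - \<eta> * (\<mu> + Q) \<le> ln (\<Sum>i<K. w i) - ln (w j) + c1 * ((\<mu> + Q) - (sx + X') / real K)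
      + c2 * ((sx + X') + real K * (\<mu> + Q))"
      using lin2[OF Hs[unfolded cst_def] L J A_def] .
    thus "\<eta> * (\<Sum>s=t..<t+Suc n. x s j) - \<eta> * rex3_exp_gain K \<gamma> x t (Suc n) w
    \<le> ln (\<Sum>i<K. w i) - ln (w j) + c1 * (rex3_exp_gain K \<gamma> x t (Suc n) w - (\<Sum>s=t..<t+Suc n. \<Sum>i<K. x s i) / real K)
      + c2 * ((\<Sum>s=t..<t+Suc n. \<Sum>i<K. x s i) + real K * rex3_exp_gain K \<gamma> x t (Suc n) w)"
      unfolding G sums .
  qed
qed

end

lemma fin_alg:
  fixes K \<gamma> X G M lnK :: real
  assumes K: "K > 0" and g: "0 < \<gamma>" "\<gamma> \<le> 1/2" and X: "X \<ge> 0" and G: "G \<ge> 0"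
    and h: "\<gamma>/K*(M - G) \<le> lnK + (\<gamma>/K*\<gamma>/(1-\<gamma>))*(G - X/K) + (\<gamma>/K)^2/(2*(1-\<gamma>))*(X + K*G)"
  shows "M - G \<le> K*lnK/\<gamma> + 3*\<gamma>*G"
proof -
  define d where "d = 1 - \<gamma>"
  have d: "d > 0" "\<gamma> = 1 - d" "d \<ge> 1/2" using g unfolding d_def by auto
  define br where "br = 3/2*G - X/(2*K)"
  have eq: "(\<gamma>/K*\<gamma>/(1-\<gamma>))*(G - X/K) + (\<gamma>/K)^2/(2*(1-\<gamma>))*(X + K*G) = \<gamma>/K * (\<gamma>/d * br)"
    unfolding br_def d_def[symmetric] using K d(1) by (simp add: field_simps power2_eq_square)
  have b1: "\<gamma>/d * br \<le> 3*\<gamma>*G"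
  proof (cases "br \<ge> 0")
    case True
    have "\<gamma>/d \<le> 2*\<gamma>" using d g by (simp add: field_simps)
    hence "\<gamma>/d * br \<le> 2*\<gamma>*br" using True by (intro mult_right_mono) auto
    also have "br \<le> 3/2*G" unfolding br_def using X K by simp
    hence "2*\<gamma>*br \<le> 2*\<gamma>*(3/2*G)" using g by (intro mult_left_mono) auto
    finally show ?thesis by (simp add: mult_ac)
  next
    case False
    have "\<gamma>/d * br \<le> 0" using False g d by (intro mult_nonneg_nonpos) auto
    also have "0 \<le> 3*\<gamma>*G" using g G by simp
    finally show ?thesis .
  qed
  have "\<gamma>/K*(M - G) \<le> lnK + \<gamma>/K*(3*\<gamma>*G)"
    using h eq b1 g K by (smt (verit) mult_left_mono divide_nonneg_pos)
  hence "K/\<gamma> * (\<gamma>/K*(M - G)) \<le> K/\<gamma> * (lnK + \<gamma>/K*(3*\<gamma>*G))"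
    using K g by (intro mult_left_mono) auto
  moreover have "K/\<gamma> * (\<gamma>/K*(M - G)) = M - G" using K g by (simp add: field_simps)
  moreover have "K/\<gamma> * (lnK + \<gamma>/K*(3*\<gamma>*G)) = K*lnK/\<gamma> + 3*\<gamma>*G" using K g by (simp add: field_simps)
  ultimately show ?thesis by simp
qed

lemma sqrt_bound_aux:
  fixes y LK T :: real
  assumes "y \<ge> 0" "LK \<ge> 0" "T \<ge> 0" "y^2 \<le> 100 * (LK * T)"
  shows "y \<le> 10 * sqrt (LK * T)"
proof -
  have "y \<le> sqrt (100 * (LK * T))" using assms by (intro real_le_rsqrt) simp
  also have "sqrt (100 * (LK * T)) = 10 * sqrt (LK * T)" by (simp add: real_sqrt_mult)
  finally show ?thesis .
qed

theorem corollary2: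
  shows "\<exists>C::real. \<forall>(K::nat) (T::nat) (x::nat \<Rightarrow> nat \<Rightarrow> real).
           K \<ge> 2 \<longrightarrow> T \<ge> 1 \<longrightarrow>
           (\<forall>t i. 1 \<le> t \<and> t \<le> T \<and> i < K \<longrightarrow> 0 \<le> x t i \<and> x t i \<le> 1) \<longrightarrow>
           G_max K T x - rex3_EG_alg K T (rex3_gamma K T x) x
             \<le> C * sqrt (real K * ln (real K) * real T)"
proof (intro exI allI impI)
  fix K T :: nat and x :: "nat \<Rightarrow> nat \<Rightarrow> real"
  assume K2: "K \<ge> 2" and T1: "T \<ge> 1" and xr: "\<forall>t i. 1 \<le> t \<and> t \<le> T \<and> i < K \<longrightarrow> 0 \<le> x t i \<and> x t i \<le> 1"
  define \<gamma> where "\<gamma> = rex3_gamma K T x"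
  define \<tau> where "\<tau> = rex3_tau K T x"
  define Gm where "Gm = G_max K T x"
  define Gn where "Gn = G_min K T x"
  define G where "G = rex3_EG_alg K T \<gamma> x"
  define LK where "LK = real K * ln (real K)"
  define Gi where "Gi i = (\<Sum>t=1..T. x t i)" for i
  have K1: "K \<ge> 1" using K2 by simp
  have Kr: "real K > 0" using K2 by simp
  have lnK: "ln (real K) > 0" using K2 by simp
  have LK: "LK > 0" unfolding LK_def using Kr lnK by simp
  have Tr: "real T \<ge> 0" by simp
  have Gi_b: "0 \<le> Gi i \<and> Gi i \<le> real T" if "i < K" for i
  proof
    show "0 \<le> Gi i" unfolding Gi_def using xr that by (intro sum_nonneg) auto
    have "Gi i \<le> (\<Sum>t=1..T. (1::real))" unfolding Gi_def using xr that by (intro sum_mono) auto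
    thus "Gi i \<le> real T" by simp
  qed
  define S where "S = Gi ` {..<K}"
  have S: "finite S" "S \<noteq> {}" unfolding S_def using K1 by (auto simp: lessThan_empty_iff)
  have GmS: "Gm = Max S" unfolding Gm_def G_max_def S_def Gi_def by simp
  have GnS: "Gn = Min S" unfolding Gn_def G_min_def S_def Gi_def by simp
  obtain j where j: "j < K" "Gm = Gi j" using Max_in[OF S] unfolding GmS S_def by auto
  obtain j' where j': "j' < K" "Gn = Gi j'" using Min_in[OF S] unfolding GnS S_def by auto
  have GnGm: "Gn \<le> Gm" unfolding GmS using Max_ge[OF S(1), of "Gi j'"] j' unfolding S_def by auto
  have Gn0: "Gn \<ge> 0" using Gi_b j' by auto
  have GmT: "Gm \<le> real T" "Gm \<ge> 0" using Gi_b j by auto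
  have e: "exp (1::real) \<ge> 5/2" "exp (1::real) \<le> 3" using exp1_ge exp_le by auto
  have tau_def': "\<tau> = exp 1 * Gm - (4 - exp 1) * Gn" unfolding \<tau>_def rex3_tau_def Gm_def Gn_def ..
  have tauGm: "Gm \<le> \<tau>"
  proof -
    have "(4 - exp 1) * Gn \<le> (4 - exp 1) * Gm" using GnGm e by (intro mult_left_mono) auto
    moreover have "Gm \<le> (2 * exp 1 - 4) * Gm" using mult_right_mono[of 1 "2 * exp 1 - 4" Gm] e GmT(2) by simp
    ultimately show ?thesis unfolding tau_def' by (simp add: algebra_simps)
  qed
  have tauT: "\<tau> \<le> 3 * real T"
  proof -
    have "0 \<le> (4 - exp 1) * Gn" using Gn0 e by simp
    moreover have "exp 1 * Gm \<le> 3 * real T" using e GmT by (intro mult_mono) auto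
    ultimately show ?thesis unfolding tau_def' by simp
  qed
  have tau0: "\<tau> \<ge> 0" using tauGm GmT by simp
  have gam: "0 < \<gamma>" "\<gamma> \<le> 1/2"
    unfolding \<gamma>_def rex3_gamma_def \<tau>_def[symmetric] using LK tau0
    by (auto simp: LK_def min_def)
  have G0: "G \<ge> 0"
  proof -
    have "\<forall>t w. (\<forall>i<K. w i > 0) \<longrightarrow> 1 \<le> t \<longrightarrow> t + T \<le> T + 1 \<longrightarrow> rex3_exp_gain K \<gamma> x t T w \<ge> 0"
      using gain_nonneg[OF K1 gam xr] .
    thus ?thesis unfolding G_def rex3_EG_alg_def by auto
  qed
  have R0: "0 \<le> 10 * sqrt (LK * real T)" using LK by simp
  have main: "Gm - G \<le> LK / \<gamma> + 3 * \<gamma> * G"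
  proof -
    have m: "\<forall>t w. (\<forall>i<K. w i > 0) \<longrightarrow> 1 \<le> t \<longrightarrow> t + T \<le> T + 1 \<longrightarrow>
      \<gamma> / real K * (\<Sum>s=t..<t+T. x s j) - \<gamma> / real K * rex3_exp_gain K \<gamma> x t T w
      \<le> ln (\<Sum>i<K. w i) - ln (w j) + \<gamma> / real K * \<gamma> / (1 - \<gamma>) * (rex3_exp_gain K \<gamma> x t T w - (\<Sum>s=t..<t+T. \<Sum>i<K. x s i) / real K)
        + (\<gamma> / real K)^2 / (2 * (1 - \<gamma>)) * ((\<Sum>s=t..<t+T. \<Sum>i<K. x s i) + real K * rex3_exp_gain K \<gamma> x t T w)"
      using main_ind[OF K1 gam xr j(1)] .
    define X where "X = (\<Sum>s=1..<1+T. \<Sum>i<K. x s i)"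
    have X0: "X \<ge> 0" unfolding X_def using xr by (intro sum_nonneg) auto
    have sj: "(\<Sum>s=1..<1+T. x s j) = Gm" unfolding j(2) Gi_def
      by (simp add: atLeastLessThanSuc_atLeastAtMost)
    have "\<gamma> / real K * (Gm - G) \<le> ln (real K) + \<gamma> / real K * \<gamma> / (1 - \<gamma>) * (G - X / real K)
        + (\<gamma> / real K)^2 / (2 * (1 - \<gamma>)) * (X + real K * G)"
      using m[rule_format, of "\<lambda>_. 1" 1] sj unfolding G_def rex3_EG_alg_def X_def
      by (simp add: right_diff_distrib)
    from fin_alg[OF Kr gam X0 G0 this] show ?thesis unfolding LK_def .
  qed
  show "G_max K T x - rex3_EG_alg K T (rex3_gamma K T x) x
             \<le> 10 * sqrt (real K * ln (real K) * real T)"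
    unfolding Gm_def[symmetric] \<gamma>_def[symmetric] G_def[symmetric] LK_def[symmetric]
  proof (cases "\<tau> = 0")
    case True
    thus "Gm - G \<le> 10 * sqrt (LK * real T)" using tauGm G0 R0 by linarith
  next
    case False
    hence tp: "\<tau> > 0" using tau0 by simp
    define s where "s = sqrt (LK / \<tau>)"
    have s0: "s > 0" unfolding s_def using LK tp by simp
    have s2: "s^2 = LK / \<tau>" unfolding s_def using LK tp by simp
    have gs: "\<gamma> = min (1/2) s" unfolding \<gamma>_def rex3_gamma_def \<tau>_def[symmetric] s_def LK_def using False by simp
    show "Gm - G \<le> 10 * sqrt (LK * real T)"
    proof (cases "s \<le> 1/2")
      case False
      hence "(1/2::real)^2 < s^2" by (intro power_strict_mono) auto
      hence "1/4 < LK / \<tau>" using s2 by (simp add: power_divide)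
      hence t4: "\<tau> < 4 * LK" using tp by (simp add: field_simps)
      have "\<tau>^2 \<le> (4 * LK) * (3 * real T)" unfolding power2_eq_square
        using t4 tauT tp by (intro mult_mono) auto
      moreover have "0 \<le> LK * real T" using LK by simp
      ultimately have "\<tau>^2 \<le> 100 * (LK * real T)" by linarith
      hence "\<tau> \<le> 10 * sqrt (LK * real T)" using tau0 LK by (intro sqrt_bound_aux) auto
      thus ?thesis using tauGm G0 by simp
    next
      case True
      hence g: "\<gamma> = s" using gs by simp
      show ?thesis
      proof (cases "G \<ge> Gm")
        case True thus ?thesis using R0 by linarith
      next
        case False
        have "LK = s^2 * \<tau>" using s2 tp by simp
        hence "LK / \<gamma> = s * \<tau>" using s0 g by (simp add: power2_eq_square)
        moreover have "3 * \<gamma> * G \<le> 3 * s * \<tau>" using g False tauGm s0 by simp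
        ultimately have r: "Gm - G \<le> 4 * (s * \<tau>)" using main by simp
        have "(4 * (s * \<tau>))^2 = 16 * (s^2 * \<tau>) * \<tau>" by (simp add: power2_eq_square)
        also have "\<dots> = 16 * LK * \<tau>" using \<open>LK = s^2 * \<tau>\<close> by simp
        also have "\<dots> \<le> 16 * LK * (3 * real T)" using tauT LK by (intro mult_left_mono) auto
        also have "\<dots> \<le> 100 * (LK * real T)" using LK by simp
        finally have "4 * (s * \<tau>) \<le> 10 * sqrt (LK * real T)"
          using s0 tau0 LK by (intro sqrt_bound_aux) auto
        thus ?thesis using r by linarith
      qed
    qed
  qed
qed

end
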